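(* Let $(X,d)$ be a metric space, and let $K\in\mathcal{K}(X)$ and $u\in\mathcal{F}(X)$ satisfy $\delta:=d_E(\chi_K,u)<\tfrac12$. Then $d_H(K,u_\alpha)\le\delta$ for every $\alpha\in\,]\delta,1-\delta]$.
   Context: Let $\mathbb{I}=[0,1]$. For a fuzzy set $u:X\to\mathbb{I}$ on a metric space $(X,d)$, its $\alpha$-level is $u_\alpha=\{x\in X: u(x)\ge\alpha\}$ for $\alpha\in\,]0,1]$, and $u_0=\overline{\{x\in X: u(x)>0\}}$. $\mathcal{F}(X)$ denotes the set of upper-semicontinuous fuzzy sets $u$ such that $u_0$ is compact and $u_1\neq\varnothing$. $\mathcal{K}(X)$ is the set of non-empty compact subsets of $X$, and for non-empty closed sets $C_1,C_2$ the Hausdorff distance is $d_H(C_1,C_2)=\max\{\sup_{x\in C_1}d(x,C_2),\sup_{y\in C_2}d(y,C_1)\}$. For $K\in\mathcal{K}(X)$, $\chi_K$ is the characteristic function of $K$ (an element of $\mathcal{F}(X)$). On $X\times\mathbb{I}$ use the metric $\overline{d}((x,\alpha),(y,\beta))=\max\{d(x,y),|\alpha-\beta|\}$. The endograph of $u$ is $\operatorname{end}(u)=\{(x,\alpha)\in X\times\mathbb{I}: u(x)\ge\alpha\}$, and the endograph metric is $d_E(u,v)=\overline{d}_H(\operatorname{end}(u),\operatorname{end}(v))$, the Hausdorff distance in $(X\times\mathbb{I},\overline{d})$. *)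

theory Defs
  imports "HOL-Analysis.Analysis"
begin

definition hausdorff_dist :: "('b \<Rightarrow> 'b \<Rightarrow> real) \<Rightarrow> 'b set \<Rightarrow> 'b set \<Rightarrow> real" where
  "hausdorff_dist D A B =
     max (SUP x\<in>A. INF y\<in>B. D x y) (SUP y\<in>B. INF x\<in>A. D x y)"

definition dbar :: "('a::metric_space \<times> real) \<Rightarrow> ('a \<times> real) \<Rightarrow> real" where
  "dbar p q = max (dist (fst p) (fst q)) \<bar>snd p - snd q\<bar>"

definition level :: "('a::metric_space \<Rightarrow> real) \<Rightarrow> real \<Rightarrow> 'a set" where
  "level u \<alpha> = (if \<alpha> = 0 then closure {x. u x > 0} else {x. u x \<ge> \<alpha>})"

definition upper_semicont :: "('a::topological_space \<Rightarrow> real) \<Rightarrow> bool" where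
  "upper_semicont u \<longleftrightarrow> (\<forall>x. \<forall>e>0. \<forall>\<^sub>F y in at x. u y < u x + e)"

definition fuzzy_F :: "('a::metric_space \<Rightarrow> real) set" where
  "fuzzy_F = {u. (\<forall>x. 0 \<le> u x \<and> u x \<le> 1) \<and> upper_semicont u
                  \<and> compact (level u 0) \<and> level u 1 \<noteq> {}}"

definition charfun :: "'a set \<Rightarrow> 'a \<Rightarrow> real" where
  "charfun K x = (if x \<in> K then 1 else 0)"

definition endograph :: "('a \<Rightarrow> real) \<Rightarrow> ('a \<times> real) set" where
  "endograph u = {(x, \<alpha>). 0 \<le> \<alpha> \<and> \<alpha> \<le> 1 \<and> u x \<ge> \<alpha>}"

definition endo_dist :: "('a::metric_space \<Rightarrow> real) \<Rightarrow> ('a \<Rightarrow> real) \<Rightarrow> real" where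
  "endo_dist u v = hausdorff_dist dbar (endograph u) (endograph v)"

end

theory Submission
  imports Defs
begin

lemma usc_closed:
  assumes "upper_semicont u"
  shows "closed {x. \<beta> \<le> u x}"
proof -
  have "open {x. u x < \<beta>}"
  proof (subst open_subopen, intro ballI)
    fix x assume "x \<in> {x. u x < \<beta>}"
    hence "\<beta> - u x > 0" by simp
    with assms have "\<forall>\<^sub>F y in at x. u y < u x + (\<beta> - u x)"
      unfolding upper_semicont_def by blast
    then obtain S where S: "open S" "x \<in> S" "\<forall>y\<in>S. y \<noteq> x \<longrightarrow> u y < \<beta>"
      unfolding eventually_at_topological by auto
    have "S \<subseteq> {x. u x < \<beta>}" using S \<open>x \<in> {x. u x < \<beta>}\<close> by auto
    thus "\<exists>T. open T \<and> x \<in> T \<and> T \<subseteq> {x. u x < \<beta>}" using S by blast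
  qed
  moreover have "- {x. \<beta> \<le> u x} = {x. u x < \<beta>}" by auto
  ultimately show ?thesis unfolding closed_def by simp
qed

lemma dbar_nonneg: "0 \<le> dbar p q"
  unfolding dbar_def by simp

lemma dbar_commute: "dbar p q = dbar q p"
  unfolding dbar_def by (simp add: dist_commute abs_minus_commute)

lemma key:
  fixes A B :: "('a::metric_space \<times> real) set"
  assumes B0: "\<forall>x. (x,0) \<in> B" and A01: "\<forall>p\<in>A. 0 \<le> snd p \<and> snd p \<le> 1"
    and p: "p \<in> A" and le: "(SUP p\<in>A. INF q\<in>B. dbar p q) \<le> d" and de: "d < e"
  shows "\<exists>q\<in>B. dbar p q < e"
proof -
  have bb: "bdd_below ((\<lambda>q. dbar p' q) ` B)" for p'
    by (rule bdd_belowI[where m=0]) (auto simp: dbar_nonneg)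
  have "(INF q\<in>B. dbar p' q) \<le> 1" if "p' \<in> A" for p'
  proof (rule cINF_lower2[OF bb, where x="(fst p', 0)"])
    show "(fst p', 0) \<in> B" using B0 by simp
    show "dbar p' (fst p', 0) \<le> 1" using A01 that unfolding dbar_def by auto
  qed
  hence "bdd_above ((\<lambda>p. INF q\<in>B. dbar p q) ` A)"
    by (intro bdd_aboveI[where M=1]) auto
  hence "(INF q\<in>B. dbar p q) \<le> (SUP p\<in>A. INF q\<in>B. dbar p q)"
    using p by (rule cSUP_upper[rotated])
  with le de have "(INF q\<in>B. dbar p q) < e" by linarith
  moreover have "B \<noteq> {}" using B0 by blast
  ultimately show ?thesis using cINF_less_iff[OF _ bb] by blast
qed

lemma INF_le_eps:
  fixes f :: "'b \<Rightarrow> real"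
  assumes "\<forall>y\<in>B. 0 \<le> f y" "\<And>e. e > 0 \<Longrightarrow> \<exists>y\<in>B. f y < d + e"
  shows "(INF y\<in>B. f y) \<le> d"
proof (rule field_le_epsilon)
  fix e :: real assume "e > 0"
  then obtain y where y: "y \<in> B" "f y < d + e" using assms(2) by blast
  have "bdd_below (f ` B)" using assms(1) by (intro bdd_belowI[where m=0]) auto
  hence "(INF y\<in>B. f y) \<le> f y" using y(1) by (rule cINF_lower)
  thus "(INF y\<in>B. f y) \<le> d + e" using y(2) by linarith
qed

theorem lemma2p4:
  fixes K :: "'a::metric_space set" and u :: "'a \<Rightarrow> real" and \<delta> \<alpha> :: real
  assumes "compact K" and "K \<noteq> {}"
    and "u \<in> fuzzy_F"
    and "\<delta> = endo_dist (charfun K) u"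
    and "\<delta> < 1/2"
    and "\<delta> < \<alpha>" and "\<alpha> \<le> 1 - \<delta>"
  shows "hausdorff_dist dist K (level u \<alpha>) \<le> \<delta>"
proof -
  have u01: "\<And>x. 0 \<le> u x \<and> u x \<le> 1" and usc: "upper_semicont u"
    and cpt: "compact (level u 0)" and ne1: "level u 1 \<noteq> {}"
    using assms(3) unfolding fuzzy_F_def by auto
  define E1 where "E1 = endograph (charfun K)"
  define E2 where "E2 = endograph u"
  have E1_0: "\<forall>x. (x,0) \<in> E1" by (simp add: E1_def endograph_def charfun_def)
  have E2_0: "\<forall>x. (x,0) \<in> E2" using u01 by (simp add: E2_def endograph_def)
  have E1_01: "\<forall>p\<in>E1. 0 \<le> snd p \<and> snd p \<le> 1" by (auto simp: E1_def endograph_def)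
  have E2_01: "\<forall>p\<in>E2. 0 \<le> snd p \<and> snd p \<le> 1" by (auto simp: E2_def endograph_def)
  have d1: "(SUP p\<in>E1. INF q\<in>E2. dbar p q) \<le> \<delta>"
    using assms(4) unfolding endo_dist_def hausdorff_dist_def E1_def E2_def by simp
  have "(SUP q\<in>E2. INF p\<in>E1. dbar p q) \<le> \<delta>"
    using assms(4) unfolding endo_dist_def hausdorff_dist_def E1_def E2_def by simp
  hence d2: "(SUP q\<in>E2. INF p\<in>E1. dbar q p) \<le> \<delta>" by (simp add: dbar_commute)
  have "\<delta> \<ge> 0"
  proof (rule ccontr)
    assume "\<not> \<delta> \<ge> 0"
    hence "\<delta> < 0" by simp
    have "(x0::'a, 0::real) \<in> E1" using E1_0 by blast
    from key[OF E2_0 E1_01 this d1 \<open>\<delta> < 0\<close>] obtain q where "dbar (x0::'a, 0::real) q < 0" by blast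
    thus False using dbar_nonneg[of "(x0::'a, 0::real)" q] by linarith
  qed
  hence apos: "\<alpha> > 0" "\<alpha> \<noteq> 0" using assms(6) by auto
  have Lalpha: "level u \<alpha> = {x. \<alpha> \<le> u x}" using apos by (simp add: level_def)
  have Lne: "level u \<alpha> \<noteq> {}" using ne1 assms(7) \<open>\<delta> \<ge> 0\<close> unfolding Lalpha
    apply (auto simp: level_def)
    by (metis add_increasing2 diff_add_cancel order_trans)
  have small: "\<exists>N. \<forall>m\<ge>N. \<alpha> / (real m + 2) < \<eta>" if "\<eta> > 0" for \<eta>
  proof -
    obtain N :: nat where N: "\<alpha> / \<eta> < real N" using reals_Archimedean2 by blast
    have "\<alpha> / (real m + 2) < \<eta>" if "m \<ge> N" for m
    proof -
      have "\<alpha> < \<eta> * real N" using N \<open>\<eta> > 0\<close> by (simp add: divide_less_eq mult.commute)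
      also have "\<dots> < \<eta> * (real m + 2)" using that \<open>\<eta> > 0\<close> by simp
      finally show ?thesis by (simp add: divide_less_eq mult.commute)
    qed
    thus ?thesis by blast
  qed
  have part1: "(INF y\<in>level u \<alpha>. dist x y) \<le> \<delta>" if xK: "x \<in> K" for x
  proof -
    have xE: "(x, 1) \<in> E1" using xK by (simp add: E1_def endograph_def charfun_def)
    have "\<exists>y. dist x y < \<delta> + \<alpha> / (real n + 2) \<and> u y > \<alpha> - \<alpha> / (real n + 2)" for n
    proof -
      have pos: "\<alpha> / (real n + 2) > 0" using apos by simp
      obtain q where q: "q \<in> E2" "dbar (x, 1) q < \<delta> + \<alpha> / (real n + 2)"
        using key[OF E2_0 E1_01 xE d1, of "\<delta> + \<alpha> / (real n + 2)"] pos by auto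
      obtain y \<beta> where qq: "q = (y, \<beta>)" by (cases q)
      have h1: "dist x y < \<delta> + \<alpha> / (real n + 2)" "\<bar>1 - \<beta>\<bar> < \<delta> + \<alpha> / (real n + 2)"
        using q(2) by (auto simp: qq dbar_def)
      have "u y \<ge> \<beta>" using q(1) by (simp add: qq E2_def endograph_def)
      hence "u y > \<alpha> - \<alpha> / (real n + 2)" using h1(2) assms(7) by (auto simp: abs_less_iff)
      with h1(1) show ?thesis by blast
    qed
    then obtain y where y: "\<And>n. dist x (y n) < \<delta> + \<alpha> / (real n + 2)"
       "\<And>n. u (y n) > \<alpha> - \<alpha> / (real n + 2)" by metis
    have "y n \<in> level u 0" for n
    proof -
      have "\<alpha> / (real n + 2) \<le> \<alpha> / 2" using apos by (intro divide_left_mono) auto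
      hence "u (y n) > 0" using y(2)[of n] apos by linarith
      thus ?thesis unfolding level_def using closure_subset[of "{x. 0 < u x}"] by auto
    qed
    then obtain l r where lr: "strict_mono (r :: nat \<Rightarrow> nat)" "(y \<circ> r) \<longlonglongrightarrow> l"
      using seq_compactE[OF compact_imp_seq_compact[OF cpt]] by metis
    have ev: "\<forall>\<^sub>F n in sequentially. \<alpha> / (real (r n) + 2) < \<eta>" if etap: "\<eta> > 0" for \<eta>
    proof -
      obtain N where N: "\<forall>m\<ge>N. \<alpha> / (real m + 2) < \<eta>" using small[OF etap] by blast
      show ?thesis unfolding eventually_sequentially
        using N seq_suble[OF lr(1)] by (meson order_trans)
    qed
    have dl: "dist x l \<le> \<delta>"
    proof (rule field_le_epsilon)
      fix \<eta> :: real assume "\<eta> > 0"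
      have "\<forall>\<^sub>F n in sequentially. (y \<circ> r) n \<in> cball x (\<delta> + \<eta>)"
      proof (rule eventually_mono[OF ev[OF \<open>\<eta> > 0\<close>]])
        fix n assume "\<alpha> / (real (r n) + 2) < \<eta>"
        thus "(y \<circ> r) n \<in> cball x (\<delta> + \<eta>)" using y(1)[of "r n"] by simp
      qed
      from Lim_in_closed_set[OF closed_cball this _ lr(2)]
      show "dist x l \<le> \<delta> + \<eta>" by simp
    qed
    have ul: "\<alpha> \<le> u l"
    proof (rule field_le_epsilon[where y="u l" and x=\<alpha>, THEN order_trans[rotated], OF _ order_refl])
      fix \<eta> :: real assume "\<eta> > 0"
      have "\<forall>\<^sub>F n in sequentially. (y \<circ> r) n \<in> {z. \<alpha> - \<eta> \<le> u z}"
      proof (rule eventually_mono[OF ev[OF \<open>\<eta> > 0\<close>]])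
        fix n assume "\<alpha> / (real (r n) + 2) < \<eta>"
        thus "(y \<circ> r) n \<in> {z. \<alpha> - \<eta> \<le> u z}" using y(2)[of "r n"] by simp
      qed
      from Lim_in_closed_set[OF usc_closed[OF usc] this _ lr(2)]
      show "\<alpha> \<le> u l + \<eta>" by simp
    qed
    have "bdd_below ((\<lambda>z. dist x z) ` level u \<alpha>)" by (intro bdd_belowI[where m=0]) auto
    moreover have "l \<in> level u \<alpha>" using ul by (simp add: Lalpha)
    ultimately show ?thesis using dl by (rule cINF_lower2)
  qed
  have part2: "(INF x\<in>K. dist x y) \<le> \<delta>" if yL: "y \<in> level u \<alpha>" for y
  proof (rule INF_le_eps)
    show "\<forall>x\<in>K. 0 \<le> dist x y" by simp
    fix e :: real assume "e > 0"
    define e' where "e' = min e ((\<alpha> - \<delta>)/2)"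
    have e'pos: "e' > 0" using \<open>e > 0\<close> assms(6) by (simp add: e'_def)
    have yE: "(y, \<alpha>) \<in> E2" using yL apos assms(7) \<open>\<delta> \<ge> 0\<close> u01[of y]
      by (auto simp: E2_def endograph_def Lalpha)
    obtain q where q: "q \<in> E1" "dbar (y, \<alpha>) q < \<delta> + e'"
      using key[OF E1_0 E2_01 yE d2, of "\<delta> + e'"] e'pos by auto
    obtain x \<beta> where qq: "q = (x, \<beta>)" by (cases q)
    have h1: "dist y x < \<delta> + e'" "\<bar>\<alpha> - \<beta>\<bar> < \<delta> + e'" using q(2) by (auto simp: qq dbar_def)
    have "e' \<le> (\<alpha> - \<delta>)/2" unfolding e'_def by (rule min.cobounded2)
    hence "\<beta> > 0" using h1(2) assms(6) by (auto simp: abs_less_iff)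
    hence "x \<in> K" using q(1) by (auto simp: qq E1_def endograph_def charfun_def split: if_splits)
    moreover have "dist x y < \<delta> + e" using h1(1) by (simp add: e'_def dist_commute)
    ultimately show "\<exists>x\<in>K. dist x y < \<delta> + e" by blast
  qed
  have "(SUP x\<in>K. INF y\<in>level u \<alpha>. dist x y) \<le> \<delta>"
    by (rule cSUP_least[OF assms(2)]) (rule part1)
  moreover have "(SUP y\<in>level u \<alpha>. INF x\<in>K. dist x y) \<le> \<delta>"
    by (rule cSUP_least[OF Lne]) (rule part2)
  ultimately show ?thesis unfolding hausdorff_dist_def by simp
qed

end
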